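(* Consider Algorithm iR2N (described in the context), suppose (A1), (A2), (A3), (A4), (A6), (A7) hold and that the algorithm generates infinitely many successful iterations. Let $\epsilon>0$, $k_\epsilon=\min\{k\in\mathbb{N}\mid \nu_k^{-1}\|\hat s_{k,\mathrm{cp}}\|<\epsilon\}$ and $\mathcal{S}(\epsilon)=\{k\in\mathbb{N}\mid \hat\rho_k\ge\hat\eta_1,\ k<k_\epsilon\}$. Then $$|\mathcal{S}(\epsilon)|\le \frac{(f+h)(x_0)-(f+h)_{\mathrm{low}}}{\tfrac12\eta_1(1-\theta_1)\nu_{\min}}\,\epsilon^{-2}=:\omega_s\epsilon^{-2}.$$
   Context: Setting. $f:\mathbb{R}^n\to\mathbb{R}$ is continuously differentiable, $h:\mathbb{R}^n\to\mathbb{R}\cup\{+\infty\}$ is proper and lower semicontinuous; the problem is $\min_x f(x)+h(x)$. $\|\cdot\|$ is the Euclidean norm (spectral norm for matrices). For each $x$, approximations $\hat f(x)\in\mathbb{R}$ of $f(x)$ and $\hat\nabla f(x)\in\mathbb{R}^n$ of $\nabla f(x)$ are available. For each $x$, $\psi(\cdot;x):\mathbb{R}^n\to\mathbb{R}\cup\{+\infty\}$ is proper, lsc, satisfies $\psi(0;x)=h(x)$ and $\partial\psi(0;x)\subseteq\partial h(x)$ ($\partial$ = limiting subdifferential), and is uniformly prox-bounded: there is $\lambda>0$ such that for every $x$ and every $0<\lambda'<\lambda$, $w\mapsto\psi(w;x)+\tfrac{1}{2\lambda'}\|w\|^2$ is bounded below. Models: $\varphi_{\mathrm{cp}}(s;x)=\hat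 f(x)+\hat\nabla f(x)^Ts$; $m_{\mathrm{cp}}(s;x,\nu^{-1})=\varphi_{\mathrm{cp}}(s;x)+\tfrac12\nu^{-1}\|s\|^2+\psi(s;x)$; for a symmetric $B(x)\in\mathbb{R}^{n\times n}$, $\varphi(s;x)=\hat f(x)+\hat\nabla f(x)^Ts+\tfrac12 s^TB(x)s$ and $m(s;x,\sigma)=\varphi(s;x)+\tfrac12\sigma\|s\|^2+\psi(s;x)$. Algorithm iR2N. Constants: $\kappa_f,\kappa_\nabla>0$, $0<\gamma_3\le 1<\gamma_1\le\gamma_2$, $0<\hat\eta_1\le\hat\eta_2<1$, $0<\theta_1<1<\theta_2$, $\sigma_{\min}>4\kappa_f\theta_1\theta_2^2/(\hat\eta_1(1-\theta_1))$, $\sigma_0\ge\sigma_{\min}$, $x_0\in\mathbb{R}^n$. At iteration $k=0,1,\dots$: choose symmetric $B_k=B(x_k)$; set $\nu_k=\theta_1/(\|B_k\|+\sigma_k)$; compute $\hat s_{k,\mathrm{cp}}$ with $m_{\mathrm{cp}}(\hat s_{k,\mathrm{cp}};x_k,\nu_k^{-1})\le m_{\mathrm{cp}}(0;x_k,\nu_k^{-1})$ (an approximate minimizer of $m_{\mathrm{cp}}(\cdot;x_k,\nu_k^{-1})$ obtained by a descent procedure from $s=0$) and set $\hat\xi_{k,\mathrm{cp}}=(\varphi_{\mathrm{cp}}+\psi)(0;x_k)-(\varphi_{\mathrm{cp}}+\psi)(\hat s_{k,\mathrm{cp}};x_k)$; compute $s_k$ with $m(s_k;x_k,\sigma_k)\le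 m(\hat s_{k,\mathrm{cp}};x_k,\sigma_k)$; if $\|s_k\|>\theta_2\|\hat s_{k,\mathrm{cp}}\|$, reset $s_k=\hat s_{k,\mathrm{cp}}$ (these computations are repeated with refined $\hat f,\hat\nabla f$ until (A6) holds). Compute $$\hat\rho_k=\frac{\hat f(x_k)+h(x_k)-\hat f(x_k+s_k)-h(x_k+s_k)}{\varphi(0;x_k)+\psi(0;x_k)-\varphi(s_k;x_k)-\psi(s_k;x_k)},$$ where $\varphi(\cdot;x_k)$ uses $B_k$. If $\hat\rho_k\ge\hat\eta_1$ (successful) set $x_{k+1}=x_k+s_k$, else $x_{k+1}=x_k$. Choose $\sigma_{k+1}\in[\gamma_3\sigma_k,\sigma_k]$ if $\hat\rho_k\ge\hat\eta_2$ (very successful), $\sigma_{k+1}\in[\sigma_k,\gamma_1\sigma_k]$ if $\hat\eta_1\le\hat\rho_k<\hat\eta_2$, $\sigma_{k+1}\in[\gamma_1\sigma_k,\gamma_2\sigma_k]$ if $\hat\rho_k<\hat\eta_1$; then reset $\sigma_{k+1}=\max(\sigma_{k+1},\sigma_{\min})$. Assumptions. (A1) $|f(x+s)-f(x)-\nabla f(x)^Ts|\le\tfrac12L\|s\|^2$ for all $x,s$, for some $L\ge0$. (A2) $\|B_k\|\le\kappa_B$ for all $k$, for some $\kappa_B>0$. (A3) $|\psi(s;x)-h(x+s)|\le\kappa_h\|s\|^2$ for all $x,s$, for some $\kappa_h>0$. (A4) For all $k$, $\varphi(0;x_k)+\psi(0;x_k)-(\varphi(s_k;x_k)+\psi(s_k;x_k))\ge(1-\theta_1)\hat\xi_{k,\mathrm{cp}}$.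 (A6) For all $k$: $|f(x_k)-\hat f(x_k)|\le\kappa_f\|s_k\|^2$, $|f(x_k+s_k)-\hat f(x_k+s_k)|\le\kappa_f\|s_k\|^2$, $\|\nabla f(x_k)-\hat\nabla f(x_k)\|\le\kappa_\nabla\|s_k\|$. (A7) There is $(f+h)_{\mathrm{low}}\in\mathbb{R}$ with $(f+h)(x)\ge(f+h)_{\mathrm{low}}$ for all $x$. Constants: $\eta_1=\hat\eta_1-4\kappa_f\theta_1\theta_2^2/((1-\theta_1)\sigma_{\min})$; $\sigma_{\mathrm{succ}}=\max\big(\theta_1\theta_2^2(L+\kappa_B+2\kappa_h+4\kappa_f+2\kappa_\nabla)/((1-\theta_1)(1-\hat\eta_2)),\ \lambda^{-1}\big)$; $\sigma_{\max}=\max(\sigma_0,\gamma_2\sigma_{\mathrm{succ}})$ (an upper bound on all $\sigma_k$); $\nu_{\min}=\theta_1/(\kappa_B+\sigma_{\max})$, so that $\nu_k\ge\nu_{\min}$ for all $k$. *)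

theory Defs
  imports "HOL-Analysis.Analysis"
begin

definition lsc :: "('a::metric_space \<Rightarrow> ereal) \<Rightarrow> bool" where
  "lsc g \<longleftrightarrow> (\<forall>y X. X \<longlonglongrightarrow> y \<longrightarrow> g y \<le> liminf (\<lambda>k. g (X k)))"

definition proper_fun :: "('a \<Rightarrow> ereal) \<Rightarrow> bool" where
  "proper_fun g \<longleftrightarrow> (\<forall>y. g y \<noteq> -\<infinity>) \<and> (\<exists>y. g y \<noteq> \<infinity>)"

definition frechet_subdiff :: "('a::real_inner \<Rightarrow> ereal) \<Rightarrow> 'a \<Rightarrow> 'a set" where
  "frechet_subdiff g x = {v. \<bar>g x\<bar> \<noteq> \<infinity> \<and>
     (\<forall>e>0. \<exists>d>0. \<forall>y. norm (y - x) < d \<longrightarrow>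
         g y \<ge> g x + ereal (inner v (y - x) - e * norm (y - x)))}"

definition limiting_subdiff :: "('a::real_inner \<Rightarrow> ereal) \<Rightarrow> 'a \<Rightarrow> 'a set" where
  "limiting_subdiff g x = {v. \<exists>X V. X \<longlonglongrightarrow> x \<and> (\<lambda>k. g (X k)) \<longlonglongrightarrow> g x \<and>
     (\<forall>k. V k \<in> frechet_subdiff g (X k)) \<and> V \<longlonglongrightarrow> v}"

end

theory Submission
  imports Defs
begin

lemma tri6:
  fixes a b c d e g :: real
  shows "\<bar>a + b - c + d + e + g\<bar> \<le> \<bar>a\<bar> + \<bar>b\<bar> + \<bar>c\<bar> + \<bar>d\<bar> + \<bar>e\<bar> + \<bar>g\<bar>"
  by linarith

lemma key_ratio:
  fixes dm num iv c ns sig C th1 th2 eh2 :: real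
  assumes dm: "dm \<ge> (1-th1)*(1/2*iv*c^2)" and iv: "iv \<ge> sig/th1"
    and ns: "ns \<le> th2*c" "0 \<le> ns" and err: "\<bar>num - dm\<bar> \<le> 1/2*C*ns^2"
    and sig: "sig \<ge> C*th1*th2^2/((1-th1)*(1-eh2))" and c: "c > 0"
    and th: "0<th1" "th1<1" "eh2 < 1" "C \<ge> 0" "sig > 0"
  shows "num/dm \<ge> eh2" "dm > 0"
proof -
  have a0: "sig/th1*c^2 \<le> iv*c^2" by (rule mult_right_mono[OF iv]) simp
  have a: "(1-th1)*(1/2*iv*c^2) \<ge> (1-th1)*(1/2*(sig/th1)*c^2)"
    using mult_left_mono[OF a0, of "(1-th1)/2"] th by (simp add: algebra_simps)
  have "(1-th1)*(1/2*(sig/th1)*c^2) = (1-th1)* sig/(2*th1)*c^2" by (simp add: field_simps)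
  hence dm2: "dm \<ge> (1-th1)* sig/(2*th1)*c^2" using dm a by linarith
  show dmp: "dm > 0"
    by (rule less_le_trans[OF _ dm2]) (use th c in auto)
  have ns2: "ns^2 \<le> th2^2*c^2" using ns power_mono[of ns "th2*c" 2] by (simp add: power_mult_distrib)
  have Ypos: "(1-th1)*(1-eh2) > 0" using th by simp
  have s2: "C*th1*th2^2 \<le> sig*((1-th1)*(1-eh2))" using sig Ypos by (simp add: pos_divide_le_eq)
  have "(1-eh2)*dm \<ge> (1-eh2)*((1-th1)* sig/(2*th1)*c^2)" using dm2 th by (intro mult_left_mono) auto
  also have "(1-eh2)*((1-th1)* sig/(2*th1)*c^2) = (sig*((1-th1)*(1-eh2)))*c^2/(2*th1)" by (simp add: field_simps)
  also have "\<dots> \<ge> (C*th1*th2^2)*c^2/(2*th1)" using s2 th by (intro divide_right_mono mult_right_mono) auto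
  finally have "(1-eh2)*dm \<ge> 1/2*C*th2^2*c^2" using th by (simp add: field_simps)
  moreover have "1/2*C*ns^2 \<le> 1/2*C*(th2^2*c^2)" using ns2 th by (intro mult_left_mono) auto
  moreover have "dm - num \<le> \<bar>num - dm\<bar>" by simp
  ultimately have "num \<ge> eh2*dm" using err by (simp add: algebra_simps)
  then show "num/dm \<ge> eh2" using dmp by (simp add: field_simps)
qed

lemma key_decr:
  fixes dm num iv c ns kf th1 th2 eh1 sm Ff :: real
  assumes dm: "dm \<ge> (1-th1)*(1/2*iv*c^2)" and iv: "iv \<ge> sm/th1"
    and ns: "ns \<le> th2*c" "0 \<le> ns" and succ: "num \<ge> eh1*dm"
    and Ff: "Ff \<ge> num - 2*kf*ns^2" and c: "c \<ge> 0"
    and th: "0<th1" "th1<1" "kf > 0" "sm > 0"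
  shows "Ff \<ge> (eh1 - 4*kf*th1*th2^2/((1-th1)* sm))*dm"
proof -
  have a0: "sm/th1*c^2 \<le> iv*c^2" by (rule mult_right_mono[OF iv]) simp
  have a: "(1-th1)*(1/2*iv*c^2) \<ge> (1-th1)*(1/2*(sm/th1)*c^2)"
    using mult_left_mono[OF a0, of "(1-th1)/2"] th by (simp add: algebra_simps)
  have "(1-th1)*(1/2*(sm/th1)*c^2) = (1-th1)* sm/(2*th1)*c^2" by (simp add: field_simps)
  hence dm2: "dm \<ge> (1-th1)* sm/(2*th1)*c^2" using dm a by linarith
  hence "c^2 \<le> dm * (2*th1)/((1-th1)* sm)" using th by (simp add: field_simps)
  moreover have ns2: "ns^2 \<le> th2^2*c^2" using ns power_mono[of ns "th2*c" 2] by (simp add: power_mult_distrib)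
  ultimately have "ns^2 \<le> th2^2*(dm * (2*th1)/((1-th1)* sm))"
    by (meson order_trans mult_left_mono zero_le_power2)
  hence "2*kf*ns^2 \<le> 2*kf*(th2^2*(dm * (2*th1)/((1-th1)* sm)))" using th by (intro mult_left_mono) auto
  also have "\<dots> = 4*kf*th1*th2^2/((1-th1)* sm)*dm" by (simp add: field_simps)
  finally show ?thesis using succ Ff by (simp add: algebra_simps)
qed

theorem lemma3p6:
  fixes f :: "real^'n \<Rightarrow> real" and gradf :: "real^'n \<Rightarrow> real^'n"
    and h :: "real^'n \<Rightarrow> ereal"
    and psi :: "real^'n \<Rightarrow> real^'n \<Rightarrow> ereal"  (* psi s y = \<psi>(s;y) *)
    and Bf :: "real^'n \<Rightarrow> real^'n^'n"
    and fh0 fh1 :: "nat \<Rightarrow> real"  (* accepted values of f^(x_k), f^(x_k+s_k) *)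
    and gh :: "nat \<Rightarrow> real^'n"      (* accepted value of grad^ f(x_k) *)
    and x s scp :: "nat \<Rightarrow> real^'n" and sigma :: "nat \<Rightarrow> real"
    and x0 :: "real^'n"
    and kf kg g1 g2 g3 eh1 eh2 th1 th2 smin s0 lam L kB kh low eps :: real
    and nu :: "nat \<Rightarrow> real" and phi :: "nat \<Rightarrow> real^'n \<Rightarrow> ereal"
    and phicp :: "nat \<Rightarrow> real^'n \<Rightarrow> ereal"
    and xicp :: "nat \<Rightarrow> ereal" and rho :: "nat \<Rightarrow> ereal"
    and eta1 ssucc smax numin :: real
  defines "nu \<equiv> \<lambda>k. th1 / (onorm (\<lambda>v. Bf (x k) *v v) + sigma k)"
    and "phicp \<equiv> \<lambda>k t. ereal (fh0 k + gh k \<bullet> t)"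
    and "phi \<equiv> \<lambda>k t. ereal (fh0 k + gh k \<bullet> t + 1/2 * (t \<bullet> (Bf (x k) *v t)))"
    and "xicp \<equiv> \<lambda>k. (phicp k 0 + psi 0 (x k)) - (phicp k (scp k) + psi (scp k) (x k))"
    and "rho \<equiv> \<lambda>k. (ereal (fh0 k) + h (x k) - ereal (fh1 k) - h (x k + s k)) /
                     (phi k 0 + psi 0 (x k) - phi k (s k) - psi (s k) (x k))"
    and "eta1 \<equiv> eh1 - 4 * kf * th1 * th2^2 / ((1 - th1) * smin)"
    and "ssucc \<equiv> max (th1 * th2^2 * (L + kB + 2*kh + 4*kf + 2*kg) / ((1 - th1) * (1 - eh2))) (1/lam)"
    and "smax \<equiv> max s0 (g2 * ssucc)"
    and "numin \<equiv> th1 / (kB + smax)"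
  assumes
    (* setting *)
        f_grad: "\<And>y. (f has_derivative (\<lambda>d. gradf y \<bullet> d)) (at y)"
    and grad_cont: "continuous_on UNIV gradf"
    and h_proper: "proper_fun h" and h_lsc: "lsc h"
    and psi_proper: "\<And>y. proper_fun (\<lambda>t. psi t y)"
    and psi_lsc: "\<And>y. lsc (\<lambda>t. psi t y)"
    and psi_0: "\<And>y. psi 0 y = h y"
    and psi_subdiff: "\<And>y. limiting_subdiff (\<lambda>t. psi t y) 0 \<subseteq> limiting_subdiff h y"
    and lam_pos: "lam > 0"
    and prox_bdd: "\<And>y l'. 0 < l' \<Longrightarrow> l' < lam \<Longrightarrow>
                     \<exists>b::real. \<forall>w. psi w y + ereal (1 / (2 * l') * (norm w)^2) \<ge> ereal b"
    and B_sym: "\<And>y. transpose (Bf y) = Bf y"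
    (* constants *)
    and kf_pos: "kf > 0" and kg_pos: "kg > 0"
    and gam: "0 < g3" "g3 \<le> 1" "1 < g1" "g1 \<le> g2"
    and etah: "0 < eh1" "eh1 \<le> eh2" "eh2 < 1"
    and theta: "0 < th1" "th1 < 1" "1 < th2"
    and smin: "smin > 4 * kf * th1 * th2^2 / (eh1 * (1 - th1))"
    and s0: "s0 \<ge> smin"
    (* algorithm iR2N *)
    and init: "x 0 = x0" "sigma 0 = s0"
    and cp_step: "\<And>k. phicp k (scp k) + ereal (1/2 * (1 / nu k) * (norm (scp k))^2) + psi (scp k) (x k)
                     \<le> phicp k 0 + ereal (1/2 * (1 / nu k) * (norm (0::real^'n))^2) + psi 0 (x k)"
    and s_step: "\<And>k. \<exists>t. phi k t + ereal (1/2 * sigma k * (norm t)^2) + psi t (x k)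
                          \<le> phi k (scp k) + ereal (1/2 * sigma k * (norm (scp k))^2) + psi (scp k) (x k)
                        \<and> s k = (if norm t > th2 * norm (scp k) then scp k else t)"
    and x_step: "\<And>k. x (Suc k) = (if rho k \<ge> ereal eh1 then x k + s k else x k)"
    and sigma_step: "\<And>k. \<exists>sg. (rho k \<ge> ereal eh2 \<longrightarrow> g3 * sigma k \<le> sg \<and> sg \<le> sigma k)
                       \<and> (ereal eh1 \<le> rho k \<and> rho k < ereal eh2 \<longrightarrow> sigma k \<le> sg \<and> sg \<le> g1 * sigma k)
                       \<and> (rho k < ereal eh1 \<longrightarrow> g1 * sigma k \<le> sg \<and> sg \<le> g2 * sigma k)
                       \<and> sigma (Suc k) = max sg smin"
    (* assumptions *)
    and A1: "L \<ge> 0" "\<And>y t. \<bar>f (y + t) - f y - gradf y \<bullet> t\<bar> \<le> 1/2 * L * (norm t)^2"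
    and A2: "kB > 0" "\<And>k. onorm (\<lambda>v. Bf (x k) *v v) \<le> kB"
    and A3: "kh > 0" "\<And>y t. \<bar>psi t y - h (y + t)\<bar> \<le> ereal (kh * (norm t)^2)"
    and A4: "\<And>k. phi k 0 + psi 0 (x k) - (phi k (s k) + psi (s k) (x k)) \<ge> ereal (1 - th1) * xicp k"
    and A6: "\<And>k. \<bar>f (x k) - fh0 k\<bar> \<le> kf * (norm (s k))^2"
            "\<And>k. \<bar>f (x k + s k) - fh1 k\<bar> \<le> kf * (norm (s k))^2"
            "\<And>k. norm (gradf (x k) - gh k) \<le> kg * norm (s k)"
    and A7: "\<And>y. ereal (f y) + h y \<ge> ereal low"
    (* infinitely many successful iterations *)
    and inf_succ: "infinite {k. rho k \<ge> ereal eh1}"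
    and eps_pos: "eps > 0"
  shows "ereal (real (card {k. rho k \<ge> ereal eh1 \<and>
                              k < (LEAST k. (1 / nu k) * norm (scp k) < eps)}))
          \<le> (ereal (f x0) + h x0 - ereal low) / ereal (1/2 * eta1 * (1 - th1) * numin)
              * ereal (1 / eps^2)"
proof -
  note nu_def = assms(1) and phicp_def = assms(2) and phi_def = assms(3) and xicp_def = assms(4)
    and rho_def = assms(5) and eta1_def = assms(6) and ssucc_def = assms(7)
    and smax_def = assms(8) and numin_def = assms(9)
  have hfin: "h y = ereal (real_of_ereal (h y))" for y
  proof -
    have "h y \<noteq> -\<infinity>" using h_proper by (simp add: proper_fun_def)
    moreover have "h y \<noteq> \<infinity>"
    proof
      assume "h y = \<infinity>"
      with A3(2)[of 0 y] psi_0[of y] show False by simp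
    qed
    ultimately show ?thesis by (cases "h y") auto
  qed
  have pfin: "psi t y = ereal (real_of_ereal (psi t y))" for t y
  proof -
    have "psi t y \<noteq> -\<infinity>" using psi_proper[of y] by (simp add: proper_fun_def)
    moreover have "psi t y \<noteq> \<infinity>"
    proof
      assume inf: "psi t y = \<infinity>"
      obtain r where r: "h (y+t) = ereal r" using hfin[of "y+t"] by blast
      from A3(2)[of t y] show False unfolding inf r by simp
    qed
    ultimately show ?thesis by (cases "psi t y") auto
  qed
  define hr where "hr y = real_of_ereal (h y)" for y
  define pr where "pr t y = real_of_ereal (psi t y)" for t y
  have h_eq: "h y = ereal (hr y)" for y using hfin hr_def by simp
  have psi_eq: "psi t y = ereal (pr t y)" for t y using pfin pr_def by simp
  have pr0: "pr 0 y = hr y" for y using psi_0[of y] h_eq psi_eq by simp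
  have A3r: "\<bar>pr t y - hr (y+t)\<bar> \<le> kh * (norm t)^2" for t y
    using A3(2)[of t y] unfolding h_eq psi_eq by simp
  define nB where "nB k = onorm (\<lambda>v. Bf (x k) *v v)" for k
  have bl: "bounded_linear (\<lambda>v. Bf (x k) *v v)" for k by (rule matrix_vector_mul_bounded_linear)
  have nB_ge: "0 \<le> nB k" for k unfolding nB_def by (rule onorm_pos_le[OF bl])
  have nB_le: "nB k \<le> kB" for k unfolding nB_def by (rule A2(2))
  have Bs: "\<bar>t \<bullet> (Bf (x k) *v t)\<bar> \<le> kB * (norm t)^2" for k t
  proof -
    have "\<bar>t \<bullet> (Bf (x k) *v t)\<bar> \<le> norm t * norm (Bf (x k) *v t)" by (rule Cauchy_Schwarz_ineq2)
    also have "norm (Bf (x k) *v t) \<le> nB k * norm t" unfolding nB_def by (rule onorm[OF bl])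
    hence "norm t * norm (Bf (x k) *v t) \<le> norm t * (nB k * norm t)" by (simp add: mult_left_mono)
    also have "\<dots> \<le> norm t * (kB * norm t)" using nB_le[of k] by (simp add: mult_left_mono mult_right_mono)
    finally show ?thesis by (simp add: power2_eq_square algebra_simps)
  qed
  have smin_pos: "smin > 0"
  proof -
    have "4 * kf * th1 * th2^2 / (eh1 * (1 - th1)) > 0" using kf_pos theta etah by simp
    thus ?thesis using smin by linarith
  qed
  have sig_ge: "sigma k \<ge> smin" for k
  proof (induction k)
    case 0 then show ?case using init s0 by simp
  next
    case (Suc k)
    from sigma_step[of k] obtain sg where "sigma (Suc k) = max sg smin" by blast
    then show ?case by simp
  qed
  have sig_pos: "sigma k > 0" for k using sig_ge[of k] smin_pos by linarith
  have nu_eq: "nu k = th1 / (nB k + sigma k)" for k unfolding nu_def nB_def by simp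
  have nu_pos: "nu k > 0" for k unfolding nu_eq using theta nB_ge[of k] sig_pos[of k] by simp
  have inv_nu: "1 / nu k = (nB k + sigma k) / th1" for k unfolding nu_eq by simp
  have inv_nu_ge: "1 / nu k \<ge> sigma k / th1" for k
    unfolding inv_nu using nB_ge[of k] theta by (simp add: divide_right_mono)
  define dm where "dm k = hr (x k) - gh k \<bullet> s k - 1/2 * (s k \<bullet> (Bf (x k) *v s k)) - pr (s k) (x k)" for k
  define xi where "xi k = hr (x k) - gh k \<bullet> scp k - pr (scp k) (x k)" for k
  define num where "num k = fh0 k + hr (x k) - fh1 k - hr (x k + s k)" for k
  have cp_r: "xi k \<ge> 1/2 * (1 / nu k) * (norm (scp k))^2" for k
    using cp_step[of k] unfolding phicp_def psi_eq pr0 xi_def by simp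
  have A4r: "dm k \<ge> (1 - th1) * xi k" for k
    using A4[of k] unfolding phi_def xicp_def phicp_def psi_eq pr0 dm_def xi_def by (simp add: algebra_simps)
  have dmx: "dm k \<ge> (1 - th1) * (1/2 * (1 / nu k) * (norm (scp k))^2)" for k
  proof -
    have "(1 - th1) * (1/2 * (1 / nu k) * (norm (scp k))^2) \<le> (1 - th1) * xi k"
      using cp_r[of k] theta by (intro mult_left_mono) auto
    thus ?thesis using A4r[of k] by linarith
  qed
  have s_le: "norm (s k) \<le> th2 * norm (scp k)" for k
  proof -
    from s_step[of k] obtain t where t: "s k = (if norm t > th2 * norm (scp k) then scp k else t)" by blast
    show ?thesis
    proof (cases "norm t > th2 * norm (scp k)")
      case True
      have "norm (scp k) \<le> th2 * norm (scp k)" using theta by (simp add: mult_le_cancel_right1)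
      then show ?thesis using t True by simp
    next
      case False then show ?thesis using t by simp
    qed
  qed
  define C where "C = L + kB + 2*kh + 4*kf + 2*kg"
  have C_ge: "C \<ge> 0" unfolding C_def using A1(1) A2(1) A3(1) kf_pos kg_pos by simp
  have err: "\<bar>num k - dm k\<bar> \<le> 1/2 * C * (norm (s k))^2" for k
  proof -
    let ?n = "(norm (s k))^2"
    have e: "num k - dm k = (fh0 k - f (x k)) + (f (x k + s k) - fh1 k)
       - (f (x k + s k) - f (x k) - gradf (x k) \<bullet> s k) + (gh k - gradf (x k)) \<bullet> s k
       + 1/2 * (s k \<bullet> (Bf (x k) *v s k)) + (pr (s k) (x k) - hr (x k + s k))"
      unfolding num_def dm_def by (simp add: inner_diff_left algebra_simps)
    have b1: "\<bar>fh0 k - f (x k)\<bar> \<le> kf * ?n" using A6(1)[of k] by (simp add: abs_minus_commute)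
    have b2: "\<bar>f (x k + s k) - fh1 k\<bar> \<le> kf * ?n" using A6(2)[of k] by simp
    have b3: "\<bar>f (x k + s k) - f (x k) - gradf (x k) \<bullet> s k\<bar> \<le> 1/2 * L * ?n" using A1(2) by simp
    have "\<bar>(gh k - gradf (x k)) \<bullet> s k\<bar> \<le> norm (gh k - gradf (x k)) * norm (s k)"
      by (rule Cauchy_Schwarz_ineq2)
    also have "\<dots> \<le> kg * norm (s k) * norm (s k)"
      using A6(3)[of k] by (simp add: norm_minus_commute mult_right_mono)
    finally have b4: "\<bar>(gh k - gradf (x k)) \<bullet> s k\<bar> \<le> kg * ?n" by (simp add: power2_eq_square)
    have b5: "\<bar>1/2 * (s k \<bullet> (Bf (x k) *v s k))\<bar> \<le> 1/2 * kB * ?n" using Bs[where k=k and t="s k"] by simp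
    have b6: "\<bar>pr (s k) (x k) - hr (x k + s k)\<bar> \<le> kh * ?n" using A3r by simp
    have "\<bar>num k - dm k\<bar> \<le> kf * ?n + kf * ?n + 1/2 * L * ?n + kg * ?n + 1/2 * kB * ?n + kh * ?n"
      unfolding e using b1 b2 b3 b4 b5 b6 tri6 by (smt (verit))
    also have "\<dots> = 1/2 * C * ?n" unfolding C_def by (simp add: algebra_simps)
    finally show ?thesis .
  qed
  have rho_eq: "rho k = ereal (num k) / ereal (dm k)" for k
    unfolding rho_def phi_def h_eq psi_eq pr0 num_def dm_def by simp
  define P where "P k \<longleftrightarrow> (1 / nu k) * norm (scp k) < eps" for k
  define N where "N = (LEAST k. (1 / nu k) * norm (scp k) < eps)"
  have notP: "\<not> ((1 / nu k) * norm (scp k) < eps)" if "k < N" for k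
    using that unfolding N_def by (rule not_less_Least)
  have scp_pos: "norm (scp k) > 0" if "k < N" for k
  proof (rule ccontr)
    assume "\<not> norm (scp k) > 0"
    hence "norm (scp k) = 0" by simp
    thus False using notP[OF that] eps_pos by simp
  qed
  have ssucc_ge: "ssucc \<ge> C * th1 * th2^2 / ((1 - th1) * (1 - eh2))"
    unfolding ssucc_def C_def by (simp add: algebra_simps)
  have ssucc_pos: "ssucc > 0" unfolding ssucc_def using lam_pos by (simp add: less_max_iff_disj)
  have very: "rho k \<ge> ereal eh2" if "k < N" "sigma k \<ge> ssucc" for k
  proof -
    have sg: "sigma k \<ge> C * th1 * th2^2 / ((1 - th1) * (1 - eh2))" using ssucc_ge that(2) by linarith
    have kr: "num k / dm k \<ge> eh2" "dm k > 0"
      using key_ratio[OF dmx[of k] inv_nu_ge[of k] s_le[of k] _ err[of k] sg scp_pos[OF that(1)]]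
        theta etah C_ge sig_pos[of k] by auto
    then show ?thesis unfolding rho_eq by (simp add: ereal_divide)
  qed
  have sig_le: "k \<le> N \<Longrightarrow> sigma k \<le> smax" for k
  proof (induction k)
    case 0 then show ?case using init unfolding smax_def by simp
  next
    case (Suc k)
    hence kN: "k < N" and IH: "sigma k \<le> smax" by auto
    from sigma_step[of k] obtain sg where sg:
      "(rho k \<ge> ereal eh2 \<longrightarrow> g3 * sigma k \<le> sg \<and> sg \<le> sigma k)"
      "(ereal eh1 \<le> rho k \<and> rho k < ereal eh2 \<longrightarrow> sigma k \<le> sg \<and> sg \<le> g1 * sigma k)"
      "(rho k < ereal eh1 \<longrightarrow> g1 * sigma k \<le> sg \<and> sg \<le> g2 * sigma k)"
      "sigma (Suc k) = max sg smin" by blast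
    have sm: "smin \<le> smax" using s0 unfolding smax_def by simp
    show ?case
    proof (cases "rho k \<ge> ereal eh2")
      case True
      then show ?thesis using sg IH sm by simp
    next
      case False
      hence lt: "sigma k < ssucc" using very[OF kN] by force
      have "sg \<le> g2 * sigma k"
      proof (cases "rho k < ereal eh1")
        case True then show ?thesis using sg(3) by simp
      next
        case False
        hence "sg \<le> g1 * sigma k" using sg(2) \<open>\<not> rho k \<ge> ereal eh2\<close> by (simp add: not_le)
        also have "\<dots> \<le> g2 * sigma k" using gam sig_pos[of k] by (simp add: mult_right_mono)
        finally show ?thesis .
      qed
      also have "\<dots> \<le> g2 * ssucc" using lt gam by simp
      also have "\<dots> \<le> smax" unfolding smax_def by simp
      finally show ?thesis using sg(4) sm by simp
    qed
  qed
  define F where "F y = f y + hr y" for y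
  define c where "c = 1/2 * eta1 * (1 - th1) * numin"
  have eta1_pos: "eta1 > 0"
  proof -
    have "4 * kf * th1 * th2^2 < smin * (eh1 * (1 - th1))"
      using smin theta etah by (simp add: pos_divide_less_eq)
    hence "4 * kf * th1 * th2^2 / ((1 - th1) * smin) < eh1"
      using theta smin_pos by (simp add: pos_divide_less_eq algebra_simps)
    thus ?thesis unfolding eta1_def by simp
  qed
  have smax_pos: "smax > 0" using s0 smin_pos unfolding smax_def by simp
  have numin_pos: "numin > 0" unfolding numin_def using theta A2(1) smax_pos by simp
  have c_pos: "c > 0" unfolding c_def using eta1_pos theta numin_pos by simp
  have decr: "F (x k) - F (x (Suc k)) \<ge> c * eps^2" if kN: "k < N" and succ: "rho k \<ge> ereal eh1" for k
  proof -
    have dmp: "dm k > 0"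
    proof -
      have "(1 - th1) * (1/2 * (1 / nu k) * (norm (scp k))^2) > 0"
        using theta nu_pos[of k] scp_pos[OF kN] by simp
      thus ?thesis using dmx[of k] by linarith
    qed
    have "num k / dm k \<ge> eh1" using succ dmp unfolding rho_eq by (simp add: ereal_divide)
    hence nm: "num k \<ge> eh1 * dm k" using dmp by (simp add: pos_le_divide_eq)
    have Ff: "F (x k) - F (x k + s k) \<ge> num k - 2 * kf * (norm (s k))^2"
      using A6(1)[of k] A6(2)[of k] unfolding F_def num_def by (simp add: abs_le_iff)
    have ivs: "1 / nu k \<ge> smin / th1"
      using inv_nu_ge[of k] sig_ge[of k] theta by (meson divide_right_mono less_imp_le order_trans)
    have "F (x k) - F (x k + s k) \<ge> (eh1 - 4 * kf * th1 * th2^2 / ((1 - th1) * smin)) * dm k"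
      by (rule key_decr[OF dmx[of k] ivs s_le[of k] _ nm Ff]) (use theta kf_pos smin_pos in auto)
    hence D1: "F (x k) - F (x (Suc k)) \<ge> eta1 * dm k" using x_step[of k] succ unfolding eta1_def by simp
    have "nu k \<ge> numin"
    proof -
      have "nB k + sigma k \<le> kB + smax" using nB_le[of k] sig_le[of k] kN by simp
      moreover have "nB k + sigma k > 0" using nB_ge[of k] sig_pos[of k] by simp
      ultimately show ?thesis unfolding nu_eq numin_def using theta
        by (simp add: frac_le)
    qed
    have g: "(1 / nu k) * norm (scp k) \<ge> eps" using notP[OF kN] by simp
    have e2: "eps^2 \<le> ((1 / nu k) * norm (scp k))^2" using g eps_pos by (simp add: power_mono)
    have "numin * eps^2 \<le> nu k * ((1 / nu k) * norm (scp k))^2"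
      using mult_mono[OF \<open>nu k \<ge> numin\<close> e2] numin_pos nu_pos[of k] by simp
    also have "\<dots> = (1 / nu k) * (norm (scp k))^2" using nu_pos[of k] by (simp add: power2_eq_square)
    finally have q: "numin * eps^2 \<le> (1 / nu k) * (norm (scp k))^2" .
    have "c * eps^2 = eta1 * ((1 - th1) * (1/2 * (numin * eps^2)))" unfolding c_def by simp
    also have "\<dots> \<le> eta1 * ((1 - th1) * (1/2 * ((1 / nu k) * (norm (scp k))^2)))"
      using q eta1_pos theta by (intro mult_left_mono) auto
    also have "\<dots> \<le> eta1 * dm k" using dmx[of k] eta1_pos by (intro mult_left_mono) auto
    finally show ?thesis using D1 by linarith
  qed
  have count: "F (x n) + c * eps^2 * real (card {k. rho k \<ge> ereal eh1 \<and> k < n}) \<le> F (x 0)"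
    if "n \<le> N" for n
    using that
  proof (induction n)
    case 0 then show ?case by simp
  next
    case (Suc n)
    hence nN: "n < N" by simp
    have IH: "F (x n) + c * eps^2 * real (card {k. rho k \<ge> ereal eh1 \<and> k < n}) \<le> F (x 0)"
      using Suc by simp
    have fin: "finite {k. rho k \<ge> ereal eh1 \<and> k < n}" by simp
    show ?case
    proof (cases "rho n \<ge> ereal eh1")
      case True
      have "{k. rho k \<ge> ereal eh1 \<and> k < Suc n} = insert n {k. rho k \<ge> ereal eh1 \<and> k < n}"
        using True by auto
      hence "card {k. rho k \<ge> ereal eh1 \<and> k < Suc n} = Suc (card {k. rho k \<ge> ereal eh1 \<and> k < n})"
        using fin by simp
      then show ?thesis using IH decr[OF nN True] by (simp add: algebra_simps)
    next
      case False
      have "{k. rho k \<ge> ereal eh1 \<and> k < Suc n} = {k. rho k \<ge> ereal eh1 \<and> k < n}"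
        using False less_Suc_eq by auto
      then show ?thesis using IH x_step[of n] False by simp
    qed
  qed
  have low: "F y \<ge> low" for y using A7[of y] unfolding F_def h_eq by simp
  let ?K = "real (card {k. rho k \<ge> ereal eh1 \<and> k < N})"
  have "c * eps^2 * ?K \<le> F x0 - low" using count[of N] low[of "x N"] init by simp
  hence "?K \<le> (F x0 - low) / c * (1 / eps^2)"
    using c_pos eps_pos by (simp add: field_simps)
  moreover have "(ereal (f x0) + h x0 - ereal low) / ereal (1/2 * eta1 * (1 - th1) * numin) * ereal (1 / eps^2)
      = ereal ((F x0 - low) / c * (1 / eps^2))"
    using c_pos unfolding F_def h_eq c_def[symmetric] by (simp add: ereal_divide)
  ultimately show ?thesis unfolding N_def by simp
qed

end
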